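(* Let $A,B$ be $d\times d$ matrices with entries in a commutative ring, such that $AB=0$. Define $c_i(A)$ by $\det(tI-A)=t^d+c_1(A)t^{d-1}+\dots+c_d(A)$, and similarly $c_j(B)$. Then $c_i(A)c_j(B)=0$ whenever $i+j>d$. *)

theory Defs
  imports "Jordan_Normal_Form.Char_Poly"
begin

definition char_coeff :: "'a :: comm_ring_1 mat \<Rightarrow> nat \<Rightarrow> 'a" where
  "char_coeff A i = coeff (char_poly A) (dim_row A - i)"

end

theory Submission
  imports Defs
begin

definition Pd :: "nat \<Rightarrow> 'a :: comm_ring_1 poly poly \<Rightarrow> bool" where
  "Pd n f = (\<forall>k. [:0,1:] ^ (n - k) dvd coeff f k)"

lemma Pd_0: "Pd 0 f" unfolding Pd_def by simp

lemma Pd_zero: "Pd n 0" unfolding Pd_def by simp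

lemma Pd_add: "Pd n f \<Longrightarrow> Pd n g \<Longrightarrow> Pd n (f + g)"
  unfolding Pd_def by (simp add: dvd_add)

lemma Pd_mult: assumes "Pd a f" "Pd b g" shows "Pd (a + b) (f * g)"
  unfolding Pd_def
proof
  fix k
  show "[:0,1:] ^ (a + b - k) dvd coeff (f * g) k"
    unfolding coeff_mult
  proof (rule dvd_sum)
    fix m assume m: "m \<in> {..k}"
    have "[:0,1:] ^ (a - m) * [:0,1:] ^ (b - (k - m)) dvd coeff f m * coeff g (k - m)"
      using assms unfolding Pd_def by (intro mult_dvd_mono) auto
    moreover have "[:0,1:] ^ (a + b - k) dvd ([:0,1:] :: 'a poly) ^ (a - m) * [:0,1:] ^ (b - (k - m))"
      unfolding power_add[symmetric] by (rule le_imp_power_dvd) (use m in auto)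
    ultimately show "[:0,1:] ^ (a + b - k) dvd coeff f m * coeff g (k - m)"
      by (rule dvd_trans[rotated])
  qed
qed

lemma Pd_prod: assumes "finite I" "\<And>i. i \<in> I \<Longrightarrow> Pd 1 (g i)"
  shows "Pd (card I) (\<Prod>i\<in>I. g i)"
  using assms
proof (induction I rule: finite_induct)
  case empty then show ?case unfolding Pd_def by simp
next
  case (insert x F)
  then have "Pd (1 + card F) (g x * prod g F)" by (intro Pd_mult) auto
  then show ?case using insert by simp
qed

lemma Pd_sum: assumes "\<And>i. i \<in> I \<Longrightarrow> Pd n (g i)"
  shows "Pd n (\<Sum>i\<in>I. g i)"
  using assms
proof (induction I rule: infinite_finite_induct)
  case (infinite A) then show ?case by (simp add: Pd_zero)
next
  case empty then show ?case by (simp add: Pd_zero)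
next
  case (insert x F) then show ?case by (simp add: Pd_add)
qed

lemma Pd_det: assumes N: "N \<in> carrier_mat n n" and e: "\<And>i j. i < n \<Longrightarrow> j < n \<Longrightarrow> Pd 1 (N $$ (i, j))"
  shows "Pd n (det N)"
proof -
  have "Pd n (\<Sum> p \<in> {p. p permutes {0 ..< n}}. signof p * (\<Prod> i = 0 ..< n. N $$ (i, p i)))"
  proof (rule Pd_sum)
    fix p assume "p \<in> {p. p permutes {0 ..< n}}"
    then have p: "p permutes {0..<n}" by simp
    have "Pd (0 + n) (signof p * (\<Prod> i = 0 ..< n. N $$ (i, p i)))"
    proof (rule Pd_mult[OF Pd_0])
      have "Pd (card {0..<n}) (\<Prod> i = 0 ..< n. N $$ (i, p i))"
        by (rule Pd_prod) (use p e permutes_in_image in auto)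
      then show "Pd n (\<Prod> i = 0 ..< n. N $$ (i, p i))" by simp
    qed
    then show "Pd n (signof p * (\<Prod> i = 0 ..< n. N $$ (i, p i)))" by simp
  qed
  then show ?thesis using det_def'[OF N] by simp
qed

interpretation const_hom: comm_ring_hom "\<lambda>p::'a::comm_ring_1. [:p:]"
  by unfold_locales auto

definition h0 :: "'a :: comm_ring_1 poly poly \<Rightarrow> 'a" where
  "h0 f = poly (poly f 0) 0"

interpretation h0_hom: comm_ring_hom "h0 :: 'a :: comm_ring_1 poly poly \<Rightarrow> 'a"
  by unfold_locales (auto simp: h0_def)

lemma Pd1_h0: assumes "h0 f = 0" shows "Pd 1 f"
  unfolding Pd_def
proof
  fix k
  show "[:0, 1:] ^ (1 - k) dvd coeff f k"
  proof (cases k)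
    case 0
    have "poly (coeff f 0) 0 = 0" using assms by (simp add: h0_def poly_0_coeff_0)
    then have "[:- 0, 1:] dvd coeff f 0" using poly_eq_0_iff_dvd by blast
    then show ?thesis using 0 by simp
  qed simp
qed

theorem lemma4p12:
  fixes A B :: "'a :: comm_ring_1 mat" and d i j :: nat
  assumes "A \<in> carrier_mat d d" and "B \<in> carrier_mat d d"
    and "A * B = 0\<^sub>m d d"
    and "i \<le> d" and "j \<le> d" and "i + j > d"
  shows "char_coeff A i * char_coeff B j = 0"
proof -
  interpret mc: map_poly_comm_ring_hom "\<lambda>a::'a. [:a:]" ..
  define MA where "MA = map_mat (map_poly (\<lambda>a::'a. [:a:])) (char_poly_matrix A)"
  define MB where "MB = map_mat (\<lambda>p::'a poly. [:p:]) (char_poly_matrix B)"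
  have cA: "MA \<in> carrier_mat d d" unfolding MA_def using assms(1) by simp
  have cB: "MB \<in> carrier_mat d d" unfolding MB_def using assms(2) by simp
  have detA: "det MA = map_poly (\<lambda>a::'a. [:a:]) (char_poly A)"
    unfolding MA_def char_poly_def by simp
  have detB: "det MB = [:char_poly B:]"
    unfolding MB_def char_poly_def by simp
  have hA: "map_mat h0 MA = - A"
    by (rule eq_matI) (use assms(1) in \<open>auto simp: MA_def char_poly_matrix_def h0_def\<close>)
  have hB: "map_mat h0 MB = - B"
    by (rule eq_matI) (use assms(2) in \<open>auto simp: MB_def char_poly_matrix_def h0_def\<close>)
  have hN: "map_mat h0 (MA * MB) = 0\<^sub>m d d"
    unfolding h0_hom.mat_hom_mult[OF cA cB] hA hB using assms(1-3) by simp
  have PN: "Pd d (det (MA * MB))"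
  proof (rule Pd_det)
    show "MA * MB \<in> carrier_mat d d" using cA cB by simp
    fix k l assume kl: "k < d" "l < d"
    have "h0 ((MA * MB) $$ (k, l)) = map_mat h0 (MA * MB) $$ (k, l)"
      using kl cA cB by simp
    also have "\<dots> = 0" unfolding hN using kl by simp
    finally show "Pd 1 ((MA * MB) $$ (k, l))" by (rule Pd1_h0)
  qed
  have F: "det (MA * MB) = map_poly (\<lambda>a::'a. [:a:]) (char_poly A) * [:char_poly B:]"
    using det_mult[OF cA cB] detA detB by simp
  have cf: "coeff (det (MA * MB)) (d - i) = Polynomial.smult (coeff (char_poly A) (d - i)) (char_poly B)"
    unfolding F by (simp add: algebra_simps)
  have "[:0,1:] ^ i dvd Polynomial.smult (coeff (char_poly A) (d - i)) (char_poly B)"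
    using PN assms(4) unfolding Pd_def cf[symmetric] by (metis diff_diff_cancel)
  then obtain g where g: "Polynomial.smult (coeff (char_poly A) (d - i)) (char_poly B) = monom 1 i * g"
    by (auto simp: monom_altdef dvd_def)
  have "coeff (Polynomial.smult (coeff (char_poly A) (d - i)) (char_poly B)) (d - j) = 0"
    unfolding g coeff_monom_mult using assms(4-6) by simp
  then show ?thesis using assms(1,2) by (simp add: char_coeff_def)
qed

end
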